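(* Under the hypotheses of Theorem 7.7 (restated: $(\mathcal{F}_\lambda)$ a coherent family, $t:\mathbb{F}_q\to\mathbb{F}_\mathfrak{l}$ the trace function of $\mathcal{F}=\mathcal{F}_\lambda$, $\mathcal{I}$ a family of sums with $\mathcal{F}$ being $\bigcup_{k\in\mathcal{I}}\mathcal{I}(k)$-compatible), we have \[\Phi(t,\mathcal{I}',a)=\frac1{|\mathbb{F}_\mathfrak{l}|}+O\big(V(t,\mathcal{I})^{1/2}\big)\] uniformly in $a\in\mathbb{F}_\mathfrak{l}$, where $\Phi(t,\mathcal{I}',a)=\frac1q\sum_{x\in\mathbb{F}_q}\Phi(t,\mathcal{I}+x,a)=\frac{|\{(k,x)\in\mathcal{I}\times\mathbb{F}_q: S(t,\mathcal{I}(k)+x)\equiv a\}|}{q|\mathcal{I}|}$.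
   Context: Notation: $S(t,E)=\sum_{y\in E}t(y)$; a family of sums is a finite set $\mathcal{I}$ with an injective map $k\mapsto\mathcal{I}(k)\subset\mathbb{F}_q$; $\Phi(t,\mathcal{I}+x,a)=|\{k\in\mathcal{I}:S(t,\mathcal{I}(k)+x)\equiv a\}|/|\mathcal{I}|$; $V(t,\mathcal{I})=\sum_{a\in\mathbb{F}_\mathfrak{l}}\frac1q\sum_{x\in\mathbb{F}_q}(\Phi(t,\mathcal{I}+x,a)-|\mathbb{F}_\mathfrak{l}|^{-1})^2$. Coherent family: irreducible sheaves $\mathcal{F}_\lambda$ of $\mathbb{F}_\mathfrak{l}$-modules on $\mathbb{P}^1_{\mathbb{F}_{q(\lambda)}}$ ($\ell$-adic middle-extension sheaves, i.e. Galois representations of $\mathrm{Gal}(\mathbb{F}_q(T)^{sep}/\mathbb{F}_q(T))$) with uniformly bounded conductor, and either all Kummer sheaves $\mathcal{L}_{\chi(f)}$ (trace function $\chi\circ f\bmod\mathfrak{l}$) with monodromy $\mu_d(\mathbb{F}_\mathfrak{l})$; or $d$ prime, arithmetic = geometric monodromy $\mu_d(\mathbb{F}_\mathfrak{l})$, no geometric isomorphism $[+a]^*\mathcal{F}_\lambda\cong\mathcal{F}_\lambda^{\otimes i}$ ($1\le i<d$, $a\neq0$); or arithmetic = geometric monodromy conjugate to $\mathrm{SL}_n(\mathbb{F}_\mathfrak{l})$ or $\mathrm{Sp}_n(\mathbb{F}_\mathfrak{l})$ ($n$ even) and no geometric isomorphism $[+a]^*\mathcal{F}_\lambda\cong\mathcal{L}\otimes\sigma(\mathcal{F}_\lambda)$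 or $\mathcal{L}\otimes D(\sigma(\mathcal{F}_\lambda))$ ($a\ne0$, $\sigma\in\mathrm{Aut}(\mathbb{F}_\mathfrak{l})$, $\mathcal{L}$ rank one). $E$-compatibility is automatic except for Kummer sheaves $\mathcal{L}_{\chi(f_1/f_2)}$, where it means $\sum_{i=1}^mx_i\ne0$ for $x_i\in E$, $1\le m\le\deg f_1$. *)

theory Defs
  imports "HOL-Analysis.Analysis"
begin

text \<open>The finite fields F_q and F_l are modelled by finite field types 'q and 'l.
A family of sums is a finite nonempty index set I with an injective map
fam : I -> finite subsets of F_q.\<close>

definition S :: "('q::field \<Rightarrow> 'l::field) \<Rightarrow> 'q set \<Rightarrow> 'l" where
  "S t E = (\<Sum>y\<in>E. t y)"

definition family_of_sums :: "'k set \<Rightarrow> ('k \<Rightarrow> 'q set) \<Rightarrow> bool" where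
  "family_of_sums I fam \<longleftrightarrow> finite I \<and> I \<noteq> {} \<and> inj_on fam I \<and> (\<forall>k\<in>I. finite (fam k))"

definition shift :: "'q::field set \<Rightarrow> 'q \<Rightarrow> 'q set" where
  "shift E x = (\<lambda>y. y + x) ` E"

definition Phi :: "('q::field \<Rightarrow> 'l::field) \<Rightarrow> 'k set \<Rightarrow> ('k \<Rightarrow> 'q set) \<Rightarrow> 'q \<Rightarrow> 'l \<Rightarrow> real" where
  "Phi t I fam x a = real (card {k\<in>I. S t (shift (fam k) x) = a}) / real (card I)"

definition Phi_avg :: "('q::{field,finite} \<Rightarrow> 'l::field) \<Rightarrow> 'k set \<Rightarrow> ('k \<Rightarrow> 'q set) \<Rightarrow> 'l \<Rightarrow> real" where
  "Phi_avg t I fam a = (1 / real CARD('q)) * (\<Sum>x\<in>(UNIV::'q set). Phi t I fam x a)"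

definition V :: "('q::{field,finite} \<Rightarrow> 'l::{field,finite}) \<Rightarrow> 'k set \<Rightarrow> ('k \<Rightarrow> 'q set) \<Rightarrow> real" where
  "V t I fam = (\<Sum>a\<in>(UNIV::'l set). (1 / real CARD('q)) *
      (\<Sum>x\<in>(UNIV::'q set). (Phi t I fam x a - 1 / real CARD('l))\<^sup>2))"

end

theory Submission
  imports Defs
begin

theorem corollary7p8:
  fixes t :: "'q::{field,finite} \<Rightarrow> 'l::{field,finite}"
    and I :: "'k set" and fam :: "'k \<Rightarrow> 'q set" and a :: 'l
  assumes "family_of_sums I fam"
  shows "\<bar>Phi_avg t I fam a - 1 / real CARD('l)\<bar> \<le> 1 * sqrt (V t I fam)"
proof -
  define n where "n = real CARD('q)"
  define f where "f x = Phi t I fam x a - 1 / real CARD('l)" for x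
  have n0: "n > 0" unfolding n_def by simp
  have avg: "Phi_avg t I fam a - 1 / real CARD('l) = (1/n) * (\<Sum>x\<in>UNIV. f x)"
  proof -
    have "(\<Sum>x\<in>UNIV. f x) = (\<Sum>x\<in>UNIV. Phi t I fam x a) - n * (1 / real CARD('l))"
      unfolding f_def n_def by (simp add: sum_subtractf)
    then show ?thesis using n0 unfolding Phi_avg_def n_def by (simp add: right_diff_distrib)
  qed
  have cs: "(\<Sum>x\<in>UNIV. f x)\<^sup>2 \<le> (\<Sum>x\<in>UNIV. (f x)\<^sup>2) * n"
    unfolding n_def using sum_squared_le_sum_of_squares[of f UNIV] by simp
  have sq: "((1/n) * (\<Sum>x\<in>UNIV. f x))\<^sup>2 \<le> (1/n) * (\<Sum>x\<in>UNIV. (f x)\<^sup>2)"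
  proof -
    have "((1/n) * (\<Sum>x\<in>UNIV. f x))\<^sup>2 = (\<Sum>x\<in>UNIV. f x)\<^sup>2 / n^2"
      by (simp add: power_divide)
    also have "\<dots> \<le> (\<Sum>x\<in>UNIV. (f x)\<^sup>2) * n / n^2"
      using cs n0 by (simp add: divide_right_mono)
    also have "\<dots> = (1/n) * (\<Sum>x\<in>UNIV. (f x)\<^sup>2)"
      using n0 by (simp add: power2_eq_square)
    finally show ?thesis .
  qed
  have term_le: "(1/n) * (\<Sum>x\<in>UNIV. (f x)\<^sup>2) \<le> V t I fam"
  proof -
    have nn: "\<And>b. 0 \<le> (1 / real CARD('q)) *
      (\<Sum>x\<in>(UNIV::'q set). (Phi t I fam x b - 1 / real CARD('l))\<^sup>2)"
      by (simp add: sum_nonneg)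
    have "(1/n) * (\<Sum>x\<in>UNIV. (f x)\<^sup>2) = (1 / real CARD('q)) *
      (\<Sum>x\<in>(UNIV::'q set). (Phi t I fam x a - 1 / real CARD('l))\<^sup>2)"
      unfolding f_def n_def by simp
    also have "\<dots> \<le> V t I fam"
      unfolding V_def
      by (rule member_le_sum[where f="\<lambda>b. (1 / real CARD('q)) *
      (\<Sum>x\<in>(UNIV::'q set). (Phi t I fam x b - 1 / real CARD('l))\<^sup>2)"]) (use nn in auto)
    finally show ?thesis .
  qed
  have "(Phi_avg t I fam a - 1 / real CARD('l))\<^sup>2 \<le> V t I fam"
    using avg sq term_le by simp
  then have "sqrt ((Phi_avg t I fam a - 1 / real CARD('l))\<^sup>2) \<le> sqrt (V t I fam)"
    using real_sqrt_le_mono by blast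
  then show ?thesis by simp
qed

end
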